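(* Let $K>1$ and let $\kappa=(x_i)_{i\in\mathbb Z}$ and $\eta=(y_i)_{i\in\mathbb Z}$ be independent $K$-contracting axes in a geodesic metric space $X$. Then there exists $K'>0$ such that: (1) for every set $J$ of consecutive integers, $\kappa|_J=(x_i)_{i\in J}$ and $\eta|_J=(y_i)_{i\in J}$ are $K'$-contracting axes; (2) for every set $J$ of consecutive integers containing $0$, $\operatorname{diam}\big(x_0\cup\pi_{\kappa|_J}(\eta)\big)<K'$; (3) for every positive integer $M$, $\operatorname{diam}\big(x_0\cup\pi_{\{x_0,\ldots,x_M\}}(\{x_i:i\le0\})\big)<K'$.
   Context: $X$ is a geodesic metric space. For $A\subseteq X$, $\pi_A(z)=\{a\in A:d(z,a)=d(z,A)\}$ and $\pi_A(B)=\bigcup_{b\in B}\pi_A(b)$. $A$ is $K$-contracting if $\pi_A(z)\ne\emptyset$ for all $z$ and $d(x,y)\le d(x,A)-K$ implies $\operatorname{diam}(\pi_A(x)\cup\pi_A(y))\le K$. A $K$-contracting axis indexed by a set $J$ of consecutive integers is a family $(x_i)_{i\in J}$ with $|i-j|/K-K\le d(x_i,x_j)\le K|i-j|+K$ whose image is $K$-contracting; projections onto it mean onto its image. Sequences $(x_i),(y_i)$ indexed by $\mathbb Z$ are independent if for every $M>0$ the set $\{(n,m):d(x_n,y_m)<M\}$ is bounded. *)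

theory Defs
  imports "HOL-Analysis.Analysis"
begin

text \<open>The ambient geodesic metric space X is the whole type 'a.\<close>

definition geodesic_space :: "'a::metric_space itself \<Rightarrow> bool" where
  "geodesic_space _ \<longleftrightarrow> (\<forall>x y::'a. \<exists>g::real \<Rightarrow> 'a. g 0 = x \<and> g (dist x y) = y \<and>
     (\<forall>s\<in>{0..dist x y}. \<forall>t\<in>{0..dist x y}. dist (g s) (g t) = \<bar>s - t\<bar>))"

definition proj :: "'a::metric_space set \<Rightarrow> 'a \<Rightarrow> 'a set" where
  "proj A z = {a \<in> A. dist z a = infdist z A}"

definition proj_set :: "'a::metric_space set \<Rightarrow> 'a set \<Rightarrow> 'a set" where
  "proj_set A B = (\<Union>b\<in>B. proj A b)"

text \<open>Diameter with values in the extended reals (infinite for unbounded sets).\<close>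
definition diam :: "'a::metric_space set \<Rightarrow> ereal" where
  "diam S = (SUP p\<in>S \<times> S. ereal (dist (fst p) (snd p)))"

definition contracting :: "real \<Rightarrow> 'a::metric_space set \<Rightarrow> bool" where
  "contracting K A \<longleftrightarrow> (\<forall>z. proj A z \<noteq> {}) \<and>
     (\<forall>x y. dist x y \<le> infdist x A - K \<longrightarrow> diam (proj A x \<union> proj A y) \<le> ereal K)"

definition consecutive :: "int set \<Rightarrow> bool" where
  "consecutive J \<longleftrightarrow> J \<noteq> {} \<and> (\<forall>a\<in>J. \<forall>b\<in>J. \<forall>c. a \<le> c \<and> c \<le> b \<longrightarrow> c \<in> J)"

definition contracting_axis :: "real \<Rightarrow> int set \<Rightarrow> (int \<Rightarrow> 'a::metric_space) \<Rightarrow> bool" where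
  "contracting_axis K J x \<longleftrightarrow> consecutive J \<and>
     (\<forall>i\<in>J. \<forall>j\<in>J. \<bar>real_of_int (i - j)\<bar> / K - K \<le> dist (x i) (x j) \<and>
                    dist (x i) (x j) \<le> K * \<bar>real_of_int (i - j)\<bar> + K) \<and>
     contracting K (x ` J)"

definition independent :: "(int \<Rightarrow> 'a::metric_space) \<Rightarrow> (int \<Rightarrow> 'a) \<Rightarrow> bool" where
  "independent x y \<longleftrightarrow> (\<forall>M>0. \<exists>N. \<forall>n m. dist (x n) (y m) < M \<longrightarrow> \<bar>n\<bar> \<le> N \<and> \<bar>m\<bar> \<le> N)"

end

theory Submission
  imports Defs
begin

lemma diam_le:
  assumes "\<And>a b. a \<in> S \<Longrightarrow> b \<in> S \<Longrightarrow> dist a b \<le> c"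
  shows "diam S \<le> ereal c"
  unfolding diam_def using assms by (auto intro!: SUP_least)

lemma diam_mem_le:
  assumes "diam S \<le> ereal c" "a \<in> S" "b \<in> S"
  shows "dist a b \<le> c"
proof -
  have "ereal (dist a b) \<le> diam S" unfolding diam_def
    using assms(2,3) by (intro SUP_upper2[of "(a,b)"]) auto
  then have "ereal (dist a b) \<le> ereal c" using assms(1) by (rule order_trans)
  then show ?thesis by simp
qed

lemma infdist_ge:
  assumes "A \<noteq> {}" "\<And>a. a \<in> A \<Longrightarrow> c \<le> dist z a"
  shows "c \<le> infdist z A"
  using assms by (simp add: infdist_notempty cINF_greatest)

lemma projD: "p \<in> proj A z \<Longrightarrow> p \<in> A \<and> dist z p = infdist z A"
  unfolding proj_def by auto

lemma chain_aux:
  fixes P :: "real \<Rightarrow> 'a::metric_space"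
  assumes "h > 0" "c \<ge> 0"
    and step: "\<And>s t. s \<in> {\<alpha>..\<beta>} \<Longrightarrow> t \<in> {\<alpha>..\<beta>} \<Longrightarrow> \<bar>s - t\<bar> \<le> h \<Longrightarrow> dist (P s) (P t) \<le> c"
  shows "\<forall>t. \<alpha> \<le> t \<and> t \<le> \<beta> \<and> t - \<alpha> \<le> real n * h \<longrightarrow> dist (P \<alpha>) (P t) \<le> real n * c"
proof (induction n)
  case 0
  then show ?case by auto
next
  case (Suc n)
  show ?case
  proof (intro allI impI)
    fix t assume t: "\<alpha> \<le> t \<and> t \<le> \<beta> \<and> t - \<alpha> \<le> real (Suc n) * h"
    show "dist (P \<alpha>) (P t) \<le> real (Suc n) * c"
    proof (cases "t - \<alpha> \<le> real n * h")
      case True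
      then have "dist (P \<alpha>) (P t) \<le> real n * c" using Suc t by auto
      then show ?thesis using assms(2) by (simp add: algebra_simps)
    next
      case False
      define t' where "t' = max \<alpha> (t - h)"
      have t'1: "\<alpha> \<le> t'" using t'_def by simp
      have t'2: "t' - \<alpha> \<le> real n * h" using t t'_def assms(1) by (auto simp: algebra_simps max_def)
      have "dist (P \<alpha>) (P t') \<le> real n * c" using Suc t'1 t'2 t t'_def assms(1) by auto
      moreover have "dist (P t') (P t) \<le> c" using step[of t' t] t t'1 t'_def assms(1) by (auto simp: max_def)
      ultimately show ?thesis using dist_triangle[of "P \<alpha>" "P t" "P t'"]
        by (simp add: algebra_simps)
    qed
  qed
qed

lemma chain:
  fixes P :: "real \<Rightarrow> 'a::metric_space"
  assumes "h > 0" "c \<ge> 0" "\<alpha> \<le> \<beta>"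
    and step: "\<And>s t. s \<in> {\<alpha>..\<beta>} \<Longrightarrow> t \<in> {\<alpha>..\<beta>} \<Longrightarrow> \<bar>s - t\<bar> \<le> h \<Longrightarrow> dist (P s) (P t) \<le> c"
  shows "dist (P \<alpha>) (P \<beta>) \<le> c * (\<beta> - \<alpha>) / h + c"
proof -
  define n where "n = nat \<lceil>(\<beta> - \<alpha>) / h\<rceil>"
  have n1: "(\<beta> - \<alpha>) / h \<le> real n" unfolding n_def by linarith
  have q0: "(\<beta> - \<alpha>) / h \<ge> 0" using assms(1,3) by simp
  then have "real n = of_int \<lceil>(\<beta> - \<alpha>) / h\<rceil>" unfolding n_def by simp
  then have n2: "real n \<le> (\<beta> - \<alpha>) / h + 1" using ceiling_correct[of "(\<beta> - \<alpha>) / h"] by linarith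
  have "\<beta> - \<alpha> \<le> real n * h" using n1 assms(1) by (simp add: divide_le_eq)
  then have "dist (P \<alpha>) (P \<beta>) \<le> real n * c"
    using chain_aux[where \<alpha>=\<alpha> and \<beta>=\<beta> and P=P and n=n, OF assms(1,2) step] assms(3) by auto
  also have "\<dots> \<le> ((\<beta> - \<alpha>) / h + 1) * c" using n2 assms(2) by (intro mult_right_mono) auto
  finally show ?thesis by (simp add: algebra_simps)
qed


lemma discrete_ivt:
  fixes a :: "nat \<Rightarrow> real" and b c W :: real
  assumes "a 0 \<le> b + c" "a N \<ge> b - c" "\<forall>i<N. \<bar>a (Suc i) - a i\<bar> \<le> W" "c \<ge> 0" "W \<ge> 0"
  shows "\<exists>i\<le>N. \<bar>a i - b\<bar> \<le> W + c"
proof (cases "{i. i \<le> N \<and> a i \<le> b} = {}")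
  case True
  then have "a 0 > b" by auto
  then show ?thesis using assms by (intro exI[of _ 0]) auto
next
  case False
  define S where "S = {i. i \<le> N \<and> a i \<le> b}"
  have fin: "finite S" unfolding S_def by auto
  define i where "i = Max S"
  have iS: "i \<in> S" using False fin unfolding i_def S_def by (intro Max_in) auto
  have imax: "j \<le> i" if "j \<in> S" for j using fin that unfolding i_def by auto
  show ?thesis
  proof (cases "i = N")
    case True
    then show ?thesis using iS assms unfolding S_def by (intro exI[of _ N]) auto
  next
    case False
    then have iN: "i < N" using iS unfolding S_def by auto
    then have "Suc i \<notin> S" using imax by fastforce
    then have "a (Suc i) > b" using iN unfolding S_def by auto
    moreover have "\<bar>a (Suc i) - a i\<bar> \<le> W" using assms(3) iN by auto
    ultimately show ?thesis using iS iN assms(4) unfolding S_def by (intro exI[of _ i]) auto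
  qed
qed

definition clampP :: "int set \<Rightarrow> int \<Rightarrow> int \<Rightarrow> bool" where
  "clampP J k c \<longleftrightarrow> c \<in> J \<and> (c = k \<or> (c < k \<and> (\<forall>i\<in>J. i \<le> c)) \<or> (k < c \<and> (\<forall>i\<in>J. c \<le> i)))"

lemma clamp_exists:
  assumes J: "consecutive J"
  shows "\<exists>c. clampP J k c"
proof (cases "k \<in> J")
  case True
  then show ?thesis unfolding clampP_def by auto
next
  case False
  obtain j0 where j0: "j0 \<in> J" using J unfolding consecutive_def by auto
  have side: "(\<forall>i\<in>J. i < k) \<or> (\<forall>i\<in>J. k < i)"
  proof (rule ccontr)
    assume "\<not> ?thesis"
    then obtain i1 i2 where "i1 \<in> J" "i2 \<in> J" "k \<le> i1" "i2 \<le> k" by force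
    then have "k \<in> J" using J unfolding consecutive_def by blast
    then show False using False by simp
  qed
  then show ?thesis
  proof
    assume all: "\<forall>i\<in>J. i < k"
    define S where "S = J \<inter> {j0..k}"
    have "j0 \<in> S" unfolding S_def using j0 all by fastforce
    then have fS: "finite S" "S \<noteq> {}" unfolding S_def by auto
    define c where "c = Max S"
    have cS: "c \<in> S" unfolding c_def using fS by (rule Max_in)
    have "\<forall>i\<in>J. i \<le> c"
    proof
      fix i assume "i \<in> J"
      show "i \<le> c"
      proof (cases "j0 \<le> i")
        case True
        then have "i \<in> S" unfolding S_def using all \<open>i \<in> J\<close> by auto
        then show ?thesis unfolding c_def using fS by auto
      next
        case False
        then show ?thesis using cS unfolding S_def by auto
      qed
    qed
    then show ?thesis using cS all unfolding clampP_def S_def by (intro exI[of _ c]) auto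
  next
    assume all: "\<forall>i\<in>J. k < i"
    define S where "S = J \<inter> {k..j0}"
    have "j0 \<in> S" unfolding S_def using j0 all by fastforce
    then have fS: "finite S" "S \<noteq> {}" unfolding S_def by auto
    define c where "c = Min S"
    have cS: "c \<in> S" unfolding c_def using fS by (rule Min_in)
    have "\<forall>i\<in>J. c \<le> i"
    proof
      fix i assume "i \<in> J"
      show "c \<le> i"
      proof (cases "i \<le> j0")
        case True
        then have "i \<in> S" unfolding S_def using all \<open>i \<in> J\<close> by auto
        then show ?thesis unfolding c_def using fS by auto
      next
        case False
        then show ?thesis using cS unfolding S_def by auto
      qed
    qed
    then show ?thesis using cS all unfolding clampP_def S_def by (intro exI[of _ c]) auto
  qed
qed

lemma clamp_lip:
  assumes "clampP J kz cz" "clampP J kw cw"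
  shows "\<bar>cz - cw\<bar> \<le> \<bar>kz - kw\<bar>"
  using assms unfolding clampP_def by (smt (verit))

lemma clamp_zero:
  assumes "clampP J k c" "0 \<in> J"
  shows "\<bar>c\<bar> \<le> \<bar>k\<bar>"
  using assms unfolding clampP_def by force

locale ax =
  fixes K :: real and x :: "int \<Rightarrow> 'a::metric_space"
  assumes geo: "geodesic_space TYPE('a)" and K1: "K > 1" and ca: "contracting_axis K UNIV x"
begin

lemma Kpos: "K > 0" using K1 by simp

lemma qi_lo: "\<bar>real_of_int (i - j)\<bar> / K - K \<le> dist (x i) (x j)"
  using ca unfolding contracting_axis_def by blast

lemma qi_up: "dist (x i) (x j) \<le> K * \<bar>real_of_int (i - j)\<bar> + K"
  using ca unfolding contracting_axis_def by blast

lemma idx_bound: "dist (x i) (x j) \<le> s \<Longrightarrow> \<bar>real_of_int (i - j)\<bar> \<le> K * (s + K)"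
proof -
  assume "dist (x i) (x j) \<le> s"
  then have "\<bar>real_of_int (i - j)\<bar> / K \<le> s + K" using qi_lo[of i j] by linarith
  then show ?thesis using Kpos by (simp add: divide_le_eq mult.commute)
qed

lemma proj_ne: "proj (range x) z \<noteq> {}"
  using ca unfolding contracting_axis_def contracting_def by auto

lemma contr:
  assumes "dist z w \<le> infdist z (range x) - K"
    "p \<in> proj (range x) z \<union> proj (range x) w" "q \<in> proj (range x) z \<union> proj (range x) w"
  shows "dist p q \<le> K"
proof -
  have "diam (proj (range x) z \<union> proj (range x) w) \<le> ereal K"
    using ca assms(1) unfolding contracting_axis_def contracting_def by auto
  then show ?thesis using diam_mem_le assms(2,3) by blast
qed

lemma proj_self: "a \<in> range x \<Longrightarrow> proj (range x) a = {a}"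
  unfolding proj_def by auto

lemma geodesic:
  fixes u v :: 'a
  shows "\<exists>g. g 0 = u \<and> g (dist u v) = v \<and> (\<forall>s\<in>{0..dist u v}. \<forall>t\<in>{0..dist u v}. dist (g s) (g t) = \<bar>s - t\<bar>)"
proof -
  have "\<forall>u v::'a. \<exists>g. g 0 = u \<and> g (dist u v) = v \<and> (\<forall>s\<in>{0..dist u v}. \<forall>t\<in>{0..dist u v}. dist (g s) (g t) = \<bar>s - t\<bar>)"
    using geo unfolding geodesic_space_def by simp
  then show ?thesis by blast
qed

lemma proj_diam:
  assumes "p \<in> proj (range x) z" "q \<in> proj (range x) z"
  shows "dist p q \<le> 2 * K"
proof (cases "infdist z (range x) \<ge> K")
  case True
  then show ?thesis using contr[of z z p q] assms Kpos by auto
next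
  case False
  have "dist p q \<le> dist z p + dist z q" by (simp add: dist_triangle3)
  then show ?thesis using projD[OF assms(1)] projD[OF assms(2)] False by linarith
qed

definition P :: "'a \<Rightarrow> 'a" where "P z = (SOME p. p \<in> proj (range x) z)"

lemma P: "P z \<in> proj (range x) z"
  unfolding P_def using proj_ne some_in_eq by blast

lemma bgi:
  assumes "a \<le> b" and iso: "\<forall>s\<in>{a..b}. \<forall>t\<in>{a..b}. dist (g s) (g t) = \<bar>s - t\<bar>"
    and far: "\<forall>t\<in>{a..b}. 3*K \<le> infdist (g t) (range x)"
    and p: "p \<in> proj (range x) (g a)" and q: "q \<in> proj (range x) (g b)"
  shows "dist p q \<le> 8*K"
proof -
  have loc: "dist p' q' \<le> K" if "s\<in>{a..b}" "t\<in>{a..b}" "\<bar>s-t\<bar> \<le> infdist (g s) (range x) - K"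
     "p'\<in>proj (range x) (g s)" "q' \<in> proj (range x) (g t)" for s t p' q'
    using contr[of "g s" "g t" p' q'] iso that by auto
  define fz where "fz = infdist (g a) (range x)"
  define fw where "fw = infdist (g b) (range x)"
  have fz3: "fz \<ge> 3*K" and fw3: "fw \<ge> 3*K" using far assms(1) fz_def fw_def by auto
  have L: "dist (g a) (g b) = b - a" using iso assms(1) by auto
  have tri: "b - a \<le> fz + dist p q + fw"
  proof -
    have "dist (g a) (g b) \<le> dist (g a) p + dist p q + dist q (g b)"
      by (meson dist_triangle order_trans add_right_mono)
    then show ?thesis using L projD[OF p] projD[OF q] fz_def fw_def by (simp add: dist_commute)
  qed
  define \<alpha> where "\<alpha> = a + fz - K"
  define \<beta> where "\<beta> = b - fw + K"
  show ?thesis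
  proof (cases "b \<le> \<alpha>")
    case True
    then have "dist p q \<le> K" using loc[of a b p q] assms(1) p q \<alpha>_def fz_def by auto
    then show ?thesis using Kpos by linarith
  next
    case b: False
    have \<alpha>a: "a \<le> \<alpha>" using \<alpha>_def fz3 Kpos by linarith
    have \<beta>b: "\<beta> \<le> b" using \<beta>_def fw3 Kpos by linarith
    show ?thesis
    proof (cases "\<beta> \<le> \<alpha>")
      case True
      have "dist p (P (g \<alpha>)) \<le> K" using loc[of a \<alpha> p "P (g \<alpha>)"] \<alpha>a b p P[of "g \<alpha>"] \<alpha>_def fz_def by auto
      moreover have "dist q (P (g \<alpha>)) \<le> K" using loc[of b \<alpha> q "P (g \<alpha>)"] \<alpha>a b q P[of "g \<alpha>"] \<beta>_def fw_def True assms(1)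
        by auto
      ultimately show ?thesis using dist_triangle3[of p q "P (g \<alpha>)"] Kpos by (simp add: dist_commute)
    next
      case False
      have 1: "dist p (P (g \<alpha>)) \<le> K" using loc[of a \<alpha> p "P (g \<alpha>)"] \<alpha>a b p P[of "g \<alpha>"] \<alpha>_def fz_def by auto
      have 2: "dist q (P (g \<beta>)) \<le> K" using loc[of b \<beta> q "P (g \<beta>)"] \<beta>b False \<alpha>a q P[of "g \<beta>"] \<beta>_def fw_def by auto
      have stp: "dist (P (g s)) (P (g t)) \<le> K"
        if st: "s \<in> {\<alpha>..\<beta>}" "t \<in> {\<alpha>..\<beta>}" "\<bar>s - t\<bar> \<le> 2 * K" for s t
      proof -
        have "s \<in> {a..b}" "t \<in> {a..b}" using st \<alpha>a \<beta>b by auto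
        moreover have "\<bar>s - t\<bar> \<le> infdist (g s) (range x) - K" using far st(3) \<open>s \<in> {a..b}\<close> by force
        ultimately show "dist (P (g s)) (P (g t)) \<le> K" using loc P by blast
      qed
      have 3: "dist (P (g \<alpha>)) (P (g \<beta>)) \<le> K * (\<beta> - \<alpha>) / (2*K) + K"
        using chain[of "2*K" K \<alpha> \<beta> "\<lambda>t. P (g t)"] stp Kpos False by auto
      have 4: "K * (\<beta> - \<alpha>) / (2*K) = (\<beta> - \<alpha>) / 2" using Kpos by simp
      have "dist p q \<le> dist p (P (g \<alpha>)) + dist (P (g \<alpha>)) (P (g \<beta>)) + dist q (P (g \<beta>))"
        by (metis dist_commute dist_triangle order_trans add_right_mono)
      then have "dist p q \<le> (\<beta> - \<alpha>) / 2 + 3*K" using 1 2 3 4 by linarith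
      moreover have "\<beta> - \<alpha> \<le> dist p q + 2*K" using tri \<alpha>_def \<beta>_def by linarith
      ultimately show ?thesis by (simp add: field_simps)
    qed
  qed
qed


lemma iso_cont:
  assumes iso: "\<forall>s\<in>{a..b}. \<forall>t\<in>{a..b}. dist (g s) (g t) = \<bar>s - t\<bar>"
  shows "continuous_on {a..b} g"
  unfolding continuous_on_iff
proof (intro ballI allI impI)
  fix t e assume "t \<in> {a..b}" "(0::real) < e"
  then show "\<exists>d>0. \<forall>t'\<in>{a..b}. dist t' t < d \<longrightarrow> dist (g t') (g t) < e"
    using iso by (intro exI[of _ e]) (auto simp: dist_real_def)
qed

lemma first_entry:
  assumes ab: "a \<le> b" and iso: "\<forall>s\<in>{a..b}. \<forall>t\<in>{a..b}. dist (g s) (g t) = \<bar>s - t\<bar>"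
    and ex: "\<exists>t\<in>{a..b}. infdist (g t) (range x) \<le> 3*K"
    and p: "p \<in> proj (range x) (g a)"
  shows "\<exists>t\<in>{a..b}. infdist (g t) (range x) \<le> 3*K \<and> dist p (P (g t)) \<le> 8*K \<and>
            (\<forall>s\<in>{a..b}. infdist (g s) (range x) \<le> 3*K \<longrightarrow> t \<le> s)"
proof -
  define T where "T = {a..b} \<inter> (\<lambda>t. infdist (g t) (range x)) -` {..3*K}"
  have "continuous_on {a..b} (\<lambda>t. infdist (g t) (range x))"
    by (intro continuous_on_infdist iso_cont[OF iso])
  then have clT: "closed T" unfolding T_def by (intro continuous_closed_preimage) auto
  have neT: "T \<noteq> {}" using ex unfolding T_def by auto
  have bdT: "bdd_below T" unfolding T_def by (rule bdd_belowI[of _ a]) auto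
  define t0 where "t0 = Inf T"
  have t0T: "t0 \<in> T" unfolding t0_def using closed_contains_Inf[OF neT bdT clT] .
  have t0min: "t0 \<le> s" if "s \<in> T" for s unfolding t0_def using cInf_lower[OF that bdT] .
  have t0ab: "t0 \<in> {a..b}" and t0f: "infdist (g t0) (range x) \<le> 3*K" using t0T unfolding T_def by auto
  have min': "\<forall>s\<in>{a..b}. infdist (g s) (range x) \<le> 3*K \<longrightarrow> t0 \<le> s"
    using t0min unfolding T_def by auto
  have "dist p (P (g t0)) \<le> 8*K"
  proof (cases "t0 = a")
    case True
    then show ?thesis using proj_diam[OF p P[of "g a"]] Kpos by simp
  next
    case False
    then have at0: "a < t0" using t0ab by auto
    have far1: "3*K < infdist (g s) (range x)" if "s \<in> {a..<t0}" for s
    proof (rule ccontr)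
      assume "\<not> 3*K < infdist (g s) (range x)"
      then have "s \<in> T" using that t0ab unfolding T_def by auto
      then show False using t0min that by fastforce
    qed
    have far2: "3*K \<le> infdist (g t0) (range x)"
    proof (rule ccontr)
      assume c: "\<not> 3*K \<le> infdist (g t0) (range x)"
      define \<delta> where "\<delta> = min (t0 - a) (3*K - infdist (g t0) (range x))"
      have \<delta>0: "\<delta> > 0" using c at0 \<delta>_def by auto
      define s where "s = t0 - \<delta>/2"
      have "\<delta> \<le> t0 - a" "\<delta> \<le> 3*K - infdist (g t0) (range x)" unfolding \<delta>_def by simp_all
      then have s1: "s \<in> {a..<t0}" using \<delta>0 s_def by auto
      have "dist (g s) (g t0) = \<delta>/2" using iso s1 t0ab s_def \<delta>0 by auto
      then have "infdist (g s) (range x) \<le> infdist (g t0) (range x) + \<delta>/2"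
        using infdist_triangle[of "g s" "range x" "g t0"] by simp
      also have "\<dots> \<le> 3*K" using \<open>\<delta> \<le> 3*K - infdist (g t0) (range x)\<close> \<delta>0 by linarith
      finally show False using far1[OF s1] by simp
    qed
    have far: "\<forall>t\<in>{a..t0}. 3*K \<le> infdist (g t) (range x)"
    proof
      fix t assume "t \<in> {a..t0}"
      then show "3*K \<le> infdist (g t) (range x)"
        using far1[of t] far2 by (cases "t = t0") auto
    qed
    show ?thesis
      by (rule bgi[of a t0 g]) (use at0 iso t0ab far p P in auto)
  qed
  then show ?thesis using t0ab t0f min' by blast
qed

lemma last_entry:
  assumes ab: "a \<le> b" and iso: "\<forall>s\<in>{a..b}. \<forall>t\<in>{a..b}. dist (g s) (g t) = \<bar>s - t\<bar>"
    and ex: "\<exists>t\<in>{a..b}. infdist (g t) (range x) \<le> 3*K"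
    and q: "q \<in> proj (range x) (g b)"
  shows "\<exists>t\<in>{a..b}. infdist (g t) (range x) \<le> 3*K \<and> dist q (P (g t)) \<le> 8*K \<and>
            (\<forall>s\<in>{a..b}. infdist (g s) (range x) \<le> 3*K \<longrightarrow> s \<le> t)"
proof -
  define g' where "g' s = g (a + b - s)" for s
  have iso': "\<forall>s\<in>{a..b}. \<forall>t\<in>{a..b}. dist (g' s) (g' t) = \<bar>s - t\<bar>"
  proof (intro ballI)
    fix s t assume "s \<in> {a..b}" "t \<in> {a..b}"
    then have "dist (g' s) (g' t) = \<bar>(a + b - s) - (a + b - t)\<bar>" unfolding g'_def using iso by auto
    then show "dist (g' s) (g' t) = \<bar>s - t\<bar>" by simp
  qed
  have ex': "\<exists>t\<in>{a..b}. infdist (g' t) (range x) \<le> 3*K"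
  proof -
    obtain t where "t \<in> {a..b}" "infdist (g t) (range x) \<le> 3*K" using ex by blast
    then show ?thesis unfolding g'_def by (intro bexI[of _ "a + b - t"]) auto
  qed
  have q': "q \<in> proj (range x) (g' a)" using q unfolding g'_def by simp
  obtain t where t: "t \<in> {a..b}" "infdist (g' t) (range x) \<le> 3*K" "dist q (P (g' t)) \<le> 8*K"
    "\<forall>s\<in>{a..b}. infdist (g' s) (range x) \<le> 3*K \<longrightarrow> t \<le> s"
    using first_entry[OF ab iso' ex' q'] by blast
  show ?thesis
  proof (intro bexI[of _ "a + b - t"] conjI ballI impI)
    show "a + b - t \<in> {a..b}" using t(1) by auto
    show "infdist (g (a + b - t)) (range x) \<le> 3 * K" using t(2) g'_def by simp
    show "dist q (P (g (a + b - t))) \<le> 8 * K" using t(3) g'_def by simp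
    fix s assume "s \<in> {a..b}" "infdist (g s) (range x) \<le> 3 * K"
    then have "t \<le> a + b - s" using t(4)[rule_format, of "a + b - s"] g'_def by auto
    then show "s \<le> a + b - t" by simp
  qed
qed

lemma F2:
  assumes p: "p \<in> proj (range x) z" and q: "q \<in> proj (range x) w" and D: "dist p q > 8*K"
  shows "dist z w \<ge> infdist z (range x) + infdist w (range x) + dist p q - 28*K"
proof -
  obtain g where g0: "g 0 = z" and gL: "g (dist z w) = w"
    and iso: "\<forall>s\<in>{0..dist z w}. \<forall>t\<in>{0..dist z w}. dist (g s) (g t) = \<bar>s - t\<bar>"
    using geodesic[of z w] by blast
  define L where "L = dist z w"
  have L0: "0 \<le> L" unfolding L_def by simp
  have ex: "\<exists>t\<in>{0..L}. infdist (g t) (range x) \<le> 3*K"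
  proof (rule ccontr)
    assume "\<not> ?thesis"
    then have far: "\<forall>t\<in>{0..L}. 3*K \<le> infdist (g t) (range x)" by force
    have "dist p q \<le> 8*K" by (rule bgi[of 0 L g]) (use L0 iso far p q g0 gL L_def in auto)
    then show False using D by simp
  qed
  obtain t where t: "t \<in> {0..L}" "infdist (g t) (range x) \<le> 3*K" "dist p (P (g t)) \<le> 8*K"
    "\<forall>s\<in>{0..L}. infdist (g s) (range x) \<le> 3*K \<longrightarrow> t \<le> s"
    using first_entry[OF L0 iso[folded L_def] ex] p g0 by blast
  obtain t' where t': "t' \<in> {0..L}" "infdist (g t') (range x) \<le> 3*K" "dist q (P (g t')) \<le> 8*K"
    "\<forall>s\<in>{0..L}. infdist (g s) (range x) \<le> 3*K \<longrightarrow> s \<le> t'"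
  proof -
    have "q \<in> proj (range x) (g L)" using q gL L_def by simp
    then show ?thesis using last_entry[OF L0 iso[folded L_def] ex, of q] that by blast
  qed
  have tt': "t \<le> t'" using t(4) t'(1,2) by blast
  have d1: "dist z (g t) = t" using iso g0 t(1) L_def by force
  have d2: "dist (g t) (g t') = t' - t" using iso t(1) t'(1) tt' L_def by force
  have d3: "dist (g t') w = L - t'"
  proof -
    have "dist (g t') (g L) = \<bar>t' - L\<bar>" using iso t'(1) L0 L_def by auto
    then show ?thesis using gL L_def t'(1) by simp
  qed
  have e1: "infdist z (range x) \<le> 3*K + t"
    using infdist_triangle[of z "range x" "g t"] t(2) d1 by simp
  have e3: "infdist w (range x) \<le> 3*K + (L - t')"
    using infdist_triangle[of w "range x" "g t'"] t'(2) d3 by (simp add: dist_commute)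
  have pu: "dist (g t) (P (g t)) \<le> 3*K" using projD[OF P[of "g t"]] t(2) by simp
  have pv: "dist (g t') (P (g t')) \<le> 3*K" using projD[OF P[of "g t'"]] t'(2) by simp
  have "dist p q \<le> dist p (P (g t)) + dist (P (g t)) q" by (rule dist_triangle)
  moreover have "dist (P (g t)) q \<le> dist (P (g t)) (g t) + dist (g t) q" by (rule dist_triangle)
  moreover have "dist (g t) q \<le> dist (g t) (g t') + dist (g t') q" by (rule dist_triangle)
  moreover have "dist (g t') q \<le> dist (g t') (P (g t')) + dist (P (g t')) q" by (rule dist_triangle)
  ultimately have "dist p q \<le> dist p (P (g t)) + dist (P (g t)) (g t) + dist (g t) (g t') + dist (g t') (P (g t')) + dist (P (g t')) q"
    by linarith
  then have "dist p q \<le> 8*K + 3*K + (t' - t) + 3*K + 8*K"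
    using t(3) t'(3) pu pv d2 by (simp add: dist_commute)
  then show ?thesis using e1 e3 L_def by linarith
qed

lemma FA:
  assumes a: "a \<in> range x" and p: "p \<in> proj (range x) z"
  shows "dist z a \<ge> infdist z (range x) + dist p a - 28*K"
proof (cases "dist p a > 8*K")
  case True
  have "a \<in> proj (range x) a" using proj_self[OF a] by simp
  from F2[OF p this True] show ?thesis using a by simp
next
  case False
  then show ?thesis using infdist_le[OF a, of z] Kpos by linarith
qed

lemma geod_near:
  assumes a: "a \<in> range x" and b: "b \<in> range x" and u: "dist a u + dist u b = dist a b"
  shows "infdist u (range x) \<le> 28*K"
proof -
  have 1: "dist u a \<ge> infdist u (range x) + dist (P u) a - 28*K" using FA[OF a P] .
  have 2: "dist u b \<ge> infdist u (range x) + dist (P u) b - 28*K" using FA[OF b P] .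
  have 3: "dist a b \<le> dist (P u) a + dist (P u) b" by (simp add: dist_triangle3)
  show ?thesis using 1 2 3 u by (simp add: dist_commute)
qed


definition idx :: "'a \<Rightarrow> int" where "idx z = (SOME n. x n = P z)"

lemma idx: "x (idx z) = P z"
proof -
  have "\<exists>n. x n = P z" using projD[OF P[of z]] by auto
  then show ?thesis unfolding idx_def by (rule someI_ex)
qed

definition W :: real where "W = K*(57*K+1)"
definition C2 :: real where "C2 = K*(W + K*K) + 29*K"

lemma straight:
  assumes jb: "j \<le> b" and bk: "b \<le> k"
  shows "dist (x j) (x k) \<ge> dist (x j) (x b) + dist (x b) (x k) - 2*C2"
proof -
  obtain g where g0: "g 0 = x j" and gL: "g (dist (x j) (x k)) = x k"
    and iso: "\<forall>s\<in>{0..dist (x j) (x k)}. \<forall>t\<in>{0..dist (x j) (x k)}. dist (g s) (g t) = \<bar>s - t\<bar>"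
    using geodesic[of "x j" "x k"] by blast
  define L where "L = dist (x j) (x k)"
  have L0: "0 \<le> L" unfolding L_def by simp
  define N where "N = nat \<lceil>L\<rceil> + 1"
  have Npos: "real N > 0" unfolding N_def by simp
  have NL: "L \<le> real N" unfolding N_def using L0 by linarith
  define t where "t i = real i * L / real N" for i :: nat
  have tin: "t i \<in> {0..L}" if "i \<le> N" for i
  proof -
    have "real i * L \<le> real N * L" using that L0 by (intro mult_right_mono) auto
    then show ?thesis unfolding t_def using Npos L0 by (auto simp: divide_le_eq mult.commute)
  qed
  have tstep: "\<bar>t (Suc i) - t i\<bar> \<le> 1" for i
  proof -
    have "t (Suc i) - t i = L / real N" unfolding t_def by (simp add: add_divide_distrib distrib_right)
    then show ?thesis using NL Npos L0 by (simp add: divide_le_eq)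
  qed
  define u where "u i = g (t i)" for i
  have between: "dist (x j) (u i) + dist (u i) (x k) = L" if "i \<le> N" for i
  proof -
    have "dist (g 0) (g (t i)) = t i" using iso tin[OF that] L0 L_def by auto
    moreover have "dist (g (t i)) (g L) = L - t i" using iso tin[OF that] L0 L_def by auto
    ultimately show ?thesis unfolding u_def using g0 gL L_def by simp
  qed
  have near: "infdist (u i) (range x) \<le> 28*K" if "i \<le> N" for i
    by (rule geod_near) (use between[OF that] L_def in auto)
  define a where "a i = real_of_int (idx (u i))" for i
  have xa: "dist (u i) (x (idx (u i))) \<le> 28*K" if "i \<le> N" for i
    using idx[of "u i"] projD[OF P[of "u i"]] near[OF that] by simp
  have astep: "\<forall>i<N. \<bar>a (Suc i) - a i\<bar> \<le> W"
  proof (intro allI impI)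
    fix i assume iN: "i < N"
    have "dist (u i) (u (Suc i)) \<le> 1" unfolding u_def using iso tin[of i] tin[of "Suc i"] iN tstep[of i] L_def
      by (simp add: abs_minus_commute)
    then have "dist (x (idx (u (Suc i)))) (x (idx (u i))) \<le> 56*K + 1"
      using xa[of i] xa[of "Suc i"] iN dist_triangle[of "x (idx (u (Suc i)))" "x (idx (u i))" "u i"]
        dist_triangle[of "x (idx (u (Suc i)))" "u i" "u (Suc i)"]
      by (simp add: dist_commute)
    then have "\<bar>real_of_int (idx (u (Suc i)) - idx (u i))\<bar> \<le> K * (56*K + 1 + K)" by (rule idx_bound)
    then show "\<bar>a (Suc i) - a i\<bar> \<le> W" unfolding a_def W_def by (simp add: algebra_simps)
  qed
  have u0: "u 0 = x j" unfolding u_def t_def using g0 by simp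
  have uN: "u N = x k" unfolding u_def t_def using gL L_def Npos by simp
  have "P (x j) = x j" using P[of "x j"] proj_self[of "x j"] by auto
  then have "dist (x (idx (u 0))) (x j) \<le> 0" using idx[of "u 0"] u0 by simp
  then have "\<bar>real_of_int (idx (u 0) - j)\<bar> \<le> K * (0 + K)" by (rule idx_bound)
  then have a0: "a 0 \<le> real_of_int b + K*K" unfolding a_def using jb by (auto simp: abs_le_iff)
  have "P (x k) = x k" using P[of "x k"] proj_self[of "x k"] by auto
  then have "dist (x (idx (u N))) (x k) \<le> 0" using idx[of "u N"] uN by simp
  then have "\<bar>real_of_int (idx (u N) - k)\<bar> \<le> K * (0 + K)" by (rule idx_bound)
  then have aN: "a N \<ge> real_of_int b - K*K" unfolding a_def using bk by (auto simp: abs_le_iff)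
  have W0: "W \<ge> 0" unfolding W_def using Kpos by simp
  obtain i where iN: "i \<le> N" and ai: "\<bar>a i - real_of_int b\<bar> \<le> W + K*K"
    using discrete_ivt[of a "real_of_int b" "K*K" N W] a0 aN astep W0 by auto
  have "dist (x b) (x (idx (u i))) \<le> K * \<bar>real_of_int (b - idx (u i))\<bar> + K" by (rule qi_up)
  also have "\<dots> \<le> K * (W + K*K) + K" using ai Kpos unfolding a_def
    by (intro add_right_mono mult_left_mono) (auto simp: abs_minus_commute)
  finally have "dist (x b) (u i) \<le> C2"
    using xa[OF iN] dist_triangle[of "x b" "u i" "x (idx (u i))"] unfolding C2_def by (simp add: dist_commute)
  moreover have "dist (x j) (x b) \<le> dist (x j) (u i) + dist (u i) (x b)" by (rule dist_triangle)
  moreover have "dist (x b) (x k) \<le> dist (x b) (u i) + dist (u i) (x k)" by (rule dist_triangle)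
  ultimately show ?thesis using between[OF iN] L_def by (simp add: dist_commute)
qed


definition C1 :: real where "C1 = 2*C2 + 28*K"

lemma C2pos: "C2 \<ge> 0" unfolding C2_def W_def using Kpos by simp

lemma KL:
  assumes k: "x k \<in> proj (range x) z" and c: "clampP J k c" and e: "e \<in> proj (x ` J) z"
  shows "dist e (x c) \<le> C1"
proof -
  obtain j where j: "j \<in> J" "e = x j" using projD[OF e] by auto
  have dj: "dist z (x j) \<le> dist z (x i)" if "i \<in> J" for i
    using projD[OF e] j infdist_le[of "x i" "x ` J" z] that by auto
  have fz: "infdist z (range x) = dist z (x k)" using projD[OF k] by simp
  have fa: "dist z (x j) \<ge> dist z (x k) + dist (x k) (x j) - 28*K" using FA[of "x j" "x k" z] k fz by simp
  have cJ: "c \<in> J" using c unfolding clampP_def by simp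
  have "c = k \<or> (c < k \<and> (\<forall>i\<in>J. i \<le> c)) \<or> (k < c \<and> (\<forall>i\<in>J. c \<le> i))"
    using c unfolding clampP_def by simp
  then show ?thesis
  proof (elim disjE conjE)
    assume "c = k"
    then show ?thesis using dj[OF cJ] fa j C2pos unfolding C1_def by (simp add: dist_commute)
  next
    assume ck: "c < k" and mx: "\<forall>i\<in>J. i \<le> c"
    have "j \<le> c" using mx j by auto
    then have st: "dist (x j) (x k) \<ge> dist (x j) (x c) + dist (x c) (x k) - 2*C2"
      using straight[of j c k] ck by simp
    have "dist z (x c) \<le> dist z (x k) + dist (x k) (x c)" by (rule dist_triangle)
    then show ?thesis using dj[OF cJ] fa st j unfolding C1_def by (simp add: dist_commute)
  next
    assume ck: "k < c" and mn: "\<forall>i\<in>J. c \<le> i"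
    have "c \<le> j" using mn j by auto
    then have st: "dist (x k) (x j) \<ge> dist (x k) (x c) + dist (x c) (x j) - 2*C2"
      using straight[of k c j] ck by simp
    have "dist z (x c) \<le> dist z (x k) + dist (x k) (x c)" by (rule dist_triangle)
    then show ?thesis using dj[OF cJ] fa st j unfolding C1_def by (simp add: dist_commute)
  qed
qed

lemma sub_proj_ne:
  assumes "J \<noteq> {}"
  shows "proj (x ` J) z \<noteq> {}"
proof -
  obtain j0 where j0: "j0 \<in> J" using assms by auto
  define d0 where "d0 = infdist z (x ` J)"
  define F where "F = {j \<in> J. dist z (x j) \<le> d0 + 1}"
  define s where "s = d0 + 1 + dist z (x j0)"
  define M where "M = \<lceil>K * (s + K)\<rceil>"
  have "F \<subseteq> {j0 - M .. j0 + M}"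
  proof
    fix j assume "j \<in> F"
    then have "dist (x j) (x j0) \<le> s" unfolding F_def s_def
      using dist_triangle3[of "x j" "x j0" z] by (simp add: dist_commute)
    then have "\<bar>real_of_int (j - j0)\<bar> \<le> K * (s + K)" by (rule idx_bound)
    then have "\<bar>j - j0\<bar> \<le> M" unfolding M_def by linarith
    then show "j \<in> {j0 - M .. j0 + M}" by auto
  qed
  then have finF: "finite F" using finite_subset by blast
  have neF: "F \<noteq> {}"
  proof
    assume "F = {}"
    then have "\<forall>b\<in>x ` J. d0 + 1 \<le> dist z b" unfolding F_def by force
    then have "d0 + 1 \<le> infdist z (x ` J)" using j0 by (intro infdist_ge) auto
    then show False unfolding d0_def by simp
  qed
  define v where "v = Min ((\<lambda>j. dist z (x j)) ` F)"
  have "v \<in> (\<lambda>j. dist z (x j)) ` F" unfolding v_def using finF neF by (intro Min_in) auto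
  then obtain m where m: "m \<in> F" "dist z (x m) = v" by auto
  have minm: "dist z (x m) \<le> dist z (x j)" if "j \<in> J" for j
  proof (cases "j \<in> F")
    case True
    then show ?thesis using m finF unfolding v_def by simp
  next
    case False
    then show ?thesis using m that unfolding F_def by auto
  qed
  have "dist z (x m) \<le> infdist z (x ` J)" using j0 minm by (intro infdist_ge) auto
  moreover have "infdist z (x ` J) \<le> dist z (x m)" using m(1) unfolding F_def by (intro infdist_le) auto
  ultimately have "x m \<in> proj (x ` J) z" unfolding proj_def using m(1) unfolding F_def by auto
  then show ?thesis by auto
qed

definition K3c :: real where "K3c = K^3"

lemma K3c: "K3c \<ge> 0" unfolding K3c_def using Kpos by simp

definition Kp :: real where "Kp = 2*C1 + 18*K3c + 2*K + 28*K + 2*C2 + 1"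

lemma Kp_ge1: "Kp \<ge> K"
  unfolding Kp_def C1_def using Kpos C2pos K3c by argo
lemma Kp_ge2: "Kp > 28*K + 2*C2"
  unfolding Kp_def C1_def using Kpos C2pos K3c by argo
lemma Kp_ge3: "Kp \<ge> 2*C1 + 18*K3c + 2*K"
  unfolding Kp_def C1_def using Kpos C2pos K3c by argo
lemmas Kp_ge = Kp_ge1 Kp_ge2 Kp_ge3

lemma sub_contracting:
  assumes J: "consecutive J"
  shows "contracting Kp (x ` J)"
  unfolding contracting_def
proof (intro conjI allI impI)
  fix z show "proj (x ` J) z \<noteq> {}" using J unfolding consecutive_def by (intro sub_proj_ne) auto
next
  fix z w assume d: "dist z w \<le> infdist z (x ` J) - Kp"
  define kz where "kz = idx z"
  define kw where "kw = idx w"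
  have kz: "x kz \<in> proj (range x) z" unfolding kz_def using idx P by simp
  have kw: "x kw \<in> proj (range x) w" unfolding kw_def using idx P by simp
  obtain cz where cz: "clampP J kz cz" using clamp_exists[OF J] by blast
  obtain cw where cw: "clampP J kw cw" using clamp_exists[OF J] by blast
  have czJ: "cz \<in> J" and cwJ: "cw \<in> J" using cz cw unfolding clampP_def by auto
  have key: "cz = cw \<or> dist (x kz) (x kw) \<le> 8*K"
  proof (rule ccontr)
    assume "\<not> ?thesis"
    then have ne: "cz \<noteq> cw" and D: "dist (x kz) (x kw) > 8*K" by auto
    have f2: "dist z w \<ge> infdist z (range x) + infdist w (range x) + dist (x kz) (x kw) - 28*K"
      by (rule F2[OF kz kw D])
    have fz: "infdist z (range x) = dist z (x kz)" using projD[OF kz] by simp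
    have "infdist z (x ` J) \<le> dist z (x cz)" using czJ by (intro infdist_le) auto
    also have "\<dots> \<le> dist z (x kz) + dist (x kz) (x cz)" by (rule dist_triangle)
    finally have "dist (x kz) (x kw) \<le> dist (x kz) (x cz) + 28*K - Kp"
      using f2 fz d infdist_nonneg[of w "range x"] by linarith
    then have DD: "dist (x kz) (x kw) < dist (x kz) (x cz) - 2*C2" using Kp_ge by linarith
    have "cz = kz \<or> (cz < kz \<and> (\<forall>i\<in>J. i \<le> cz)) \<or> (kz < cz \<and> (\<forall>i\<in>J. cz \<le> i))"
      using cz unfolding clampP_def by simp
    then show False
    proof (elim disjE conjE)
      assume "cz = kz"
      then show False using DD C2pos zero_le_dist[of "x kz" "x kw"] by simp
    next
      assume a1: "cz < kz" and a2: "\<forall>i\<in>J. i \<le> cz"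
      have "kw \<le> cz" using cw a2 ne cwJ czJ unfolding clampP_def by force
      then have "dist (x kw) (x kz) \<ge> dist (x kw) (x cz) + dist (x cz) (x kz) - 2*C2"
        using straight[of kw cz kz] a1 by simp
      then show False using DD zero_le_dist[of "x cz" "x kw"] by (simp add: dist_commute)
    next
      assume a1: "kz < cz" and a2: "\<forall>i\<in>J. cz \<le> i"
      have "cz \<le> kw" using cw a2 ne cwJ czJ unfolding clampP_def by force
      then have "dist (x kz) (x kw) \<ge> dist (x kz) (x cz) + dist (x cz) (x kw) - 2*C2"
        using straight[of kz cz kw] a1 by simp
      then show False using DD zero_le_dist[of "x cz" "x kw"] by simp
    qed
  qed
  have cc: "dist (x cz) (x cw) \<le> 9*K3c + K"
  proof (cases "cz = cw")
    case True
    then show ?thesis using Kpos K3c by simp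
  next
    case False
    then have "dist (x kz) (x kw) \<le> 8*K" using key by simp
    then have "\<bar>real_of_int (kz - kw)\<bar> \<le> K * (8*K + K)" by (rule idx_bound)
    moreover have "\<bar>cz - cw\<bar> \<le> \<bar>kz - kw\<bar>" by (rule clamp_lip[OF cz cw])
    ultimately have "\<bar>real_of_int (cz - cw)\<bar> \<le> 9*K^2" by (simp add: power2_eq_square)
    then have "K * \<bar>real_of_int (cz - cw)\<bar> \<le> K * (9*K^2)" using Kpos by (intro mult_left_mono) auto
    then show ?thesis using qi_up[of cz cw] unfolding K3c_def by (simp add: power3_eq_cube power2_eq_square)
  qed
  have ez: "dist e (x cz) \<le> C1" if "e \<in> proj (x ` J) z" for e using KL[OF kz cz that] .
  have ew: "dist e (x cw) \<le> C1" if "e \<in> proj (x ` J) w" for e using KL[OF kw cw that] .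
  show "diam (proj (x ` J) z \<union> proj (x ` J) w) \<le> ereal Kp"
  proof (rule diam_le)
    fix e1 e2 assume e1: "e1 \<in> proj (x ` J) z \<union> proj (x ` J) w" and e2: "e2 \<in> proj (x ` J) z \<union> proj (x ` J) w"
    have b1: "dist e1 (x cz) \<le> C1 + 9*K3c + K"
    proof (cases "e1 \<in> proj (x ` J) z")
      case True
      then show ?thesis using ez[OF True] K3c Kpos by linarith
    next
      case False
      then have "dist e1 (x cw) \<le> C1" using e1 ew by auto
      then show ?thesis using cc dist_triangle[of e1 "x cz" "x cw"] by (simp add: dist_commute)
    qed
    have b2: "dist e2 (x cz) \<le> C1 + 9*K3c + K"
    proof (cases "e2 \<in> proj (x ` J) z")
      case True
      then show ?thesis using ez[OF True] K3c Kpos by linarith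
    next
      case False
      then have "dist e2 (x cw) \<le> C1" using e2 ew by auto
      then show ?thesis using cc dist_triangle[of e2 "x cz" "x cw"] by (simp add: dist_commute)
    qed
    have "dist e1 e2 \<le> dist e1 (x cz) + dist e2 (x cz)" by (rule dist_triangle2)
    then show "dist e1 e2 \<le> Kp" using b1 b2 Kp_ge by argo
  qed
qed

lemma sub_axis:
  assumes J: "consecutive J"
  shows "contracting_axis Kp J x"
  unfolding contracting_axis_def
proof (intro conjI ballI)
  show "consecutive J" by fact
  show "contracting Kp (x ` J)" using sub_contracting[OF J] .
  fix i j assume "i \<in> J" "j \<in> J"
  have "\<bar>real_of_int (i - j)\<bar> / Kp \<le> \<bar>real_of_int (i - j)\<bar> / K"
    using Kp_ge Kpos by (intro divide_left_mono) auto
  then show "\<bar>real_of_int (i - j)\<bar> / Kp - Kp \<le> dist (x i) (x j)"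
    using qi_lo[of i j] Kp_ge by linarith
  have "K * \<bar>real_of_int (i - j)\<bar> \<le> Kp * \<bar>real_of_int (i - j)\<bar>"
    using Kp_ge by (intro mult_right_mono) auto
  then show "dist (x i) (x j) \<le> Kp * \<bar>real_of_int (i - j)\<bar> + Kp"
    using qi_up[of i j] Kp_ge by linarith
qed

end

locale ax2 = X: ax K x + Y: ax K y for K and x y :: "int \<Rightarrow> 'a::metric_space" +
  assumes indep: "independent x y"
begin

lemma BP_pos: "\<exists>N. \<forall>m\<ge>0. \<forall>k. x k \<in> proj (range x) (y m) \<longrightarrow> \<bar>real_of_int k\<bar> \<le> N"
proof -
  define R0 where "R0 = 31*K + 1"
  have "R0 > 0" unfolding R0_def using X.Kpos by simp
  then obtain N0 where N0: "\<And>n m. dist (x n) (y m) < R0 \<Longrightarrow> \<bar>n\<bar> \<le> N0 \<and> \<bar>m\<bar> \<le> N0"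
    using indep unfolding independent_def by blast
  have farY: "infdist (y m) (range x) \<ge> R0" if "m > N0" for m
  proof (rule infdist_ge)
    show "range x \<noteq> {}" by simp
    fix b assume "b \<in> range x"
    then obtain n where "b = x n" by auto
    then show "R0 \<le> dist (y m) b" using N0[of n m] that by (force simp: dist_commute)
  qed
  define \<Delta> where "\<Delta> = K * (Y.C2 + 28*K + K)"
  have \<Delta>0: "\<Delta> \<ge> 0" unfolding \<Delta>_def using X.Kpos Y.C2pos by simp
  have nearidx: "real_of_int m'' \<ge> real_of_int m0 - \<Delta>"
    if bt: "dist (y m0) u + dist u (y m) = dist (y m0) (y m)" and mm: "m0 \<le> m"
      and m'': "y m'' \<in> proj (range y) u" for m0 m u m''
  proof (cases "m'' < m0")
    case False
    then show ?thesis using \<Delta>0 by simp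
  next
    case True
    have 1: "dist u (y m0) \<ge> infdist u (range y) + dist (y m'') (y m0) - 28*K"
      using Y.FA[OF _ m''] by simp
    have 2: "dist u (y m) \<ge> infdist u (range y) + dist (y m'') (y m) - 28*K"
      using Y.FA[OF _ m''] by simp
    have 3: "dist (y m'') (y m) \<ge> dist (y m'') (y m0) + dist (y m0) (y m) - 2*Y.C2"
      using Y.straight[of m'' m0 m] True mm by simp
    have "dist (y m'') (y m0) \<le> Y.C2 + 28*K"
      using 1 2 3 bt infdist_nonneg[of u "range y"] by (simp add: dist_commute)
    then have "\<bar>real_of_int (m'' - m0)\<bar> \<le> K * (Y.C2 + 28*K + K)" by (rule Y.idx_bound)
    then show ?thesis unfolding \<Delta>_def by linarith
  qed
  define m0 where "m0 = max 0 (N0 + 1 + \<lceil>\<Delta>\<rceil>)"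
  have m0pos: "m0 \<ge> 0" unfolding m0_def by simp
  define k0 where "k0 = X.idx (y m0)"
  have k0: "x k0 \<in> proj (range x) (y m0)" unfolding k0_def using X.idx X.P by simp
  have far_part: "\<bar>real_of_int (k - k0)\<bar> \<le> K * (8*K + K)"
    if mm: "m0 \<le> m" and k: "x k \<in> proj (range x) (y m)" for m k
  proof -
    obtain g where g0: "g 0 = y m0" and gL: "g (dist (y m0) (y m)) = y m"
      and iso: "\<forall>s\<in>{0..dist (y m0) (y m)}. \<forall>t\<in>{0..dist (y m0) (y m)}. dist (g s) (g t) = \<bar>s - t\<bar>"
      using X.geodesic[of "y m0" "y m"] by blast
    define L where "L = dist (y m0) (y m)"
    have Lnn: "0 \<le> L" unfolding L_def by simp
    have far: "\<forall>t\<in>{0..L}. 3*K \<le> infdist (g t) (range x)"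
    proof
      fix t assume t: "t \<in> {0..L}"
      have bt: "dist (y m0) (g t) + dist (g t) (y m) = dist (y m0) (y m)"
      proof -
        have "dist (g 0) (g t) = t" using iso t L_def by auto
        moreover have "dist (g t) (g L) = L - t" using iso t L_def by auto
        ultimately show ?thesis using g0 gL L_def by simp
      qed
      have nE: "infdist (g t) (range y) \<le> 28*K" by (rule Y.geod_near) (use bt in auto)
      define m'' where "m'' = Y.idx (g t)"
      have m'': "y m'' \<in> proj (range y) (g t)" unfolding m''_def using Y.idx Y.P by simp
      have "real_of_int m'' \<ge> real_of_int m0 - \<Delta>" by (rule nearidx[OF bt mm m''])
      moreover have "real_of_int m0 \<ge> real_of_int N0 + 1 + \<Delta>" unfolding m0_def
        using ceiling_correct[of \<Delta>] by linarith
      ultimately have "m'' > N0" by linarith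
      then have "infdist (y m'') (range x) \<ge> R0" by (rule farY)
      moreover have "dist (g t) (y m'') \<le> 28*K" using projD[OF m''] nE by simp
      moreover have "infdist (y m'') (range x) \<le> infdist (g t) (range x) + dist (y m'') (g t)"
        by (rule infdist_triangle)
      ultimately show "3*K \<le> infdist (g t) (range x)" unfolding R0_def by (simp add: dist_commute)
    qed
    have "dist k0' (x k) \<le> 8*K" if "k0' \<in> proj (range x) (y m0)" for k0'
      by (rule X.bgi[of 0 L g]) (use Lnn iso far that k g0 gL L_def in auto)
    then have "dist (x k) (x k0) \<le> 8*K" using k0 by (simp add: dist_commute)
    then show ?thesis by (rule X.idx_bound)
  qed
  define d00 where "d00 = dist (y 0) (x 0)"
  have near_part: "\<bar>real_of_int k\<bar> \<le> K * (2*(K * real_of_int m0 + K + d00) + K)"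
    if m: "0 \<le> m" "m \<le> m0" and k: "x k \<in> proj (range x) (y m)" for m k
  proof -
    have "dist (y m) (x k) \<le> dist (y m) (x 0)"
      using projD[OF k] infdist_le[of "x 0" "range x" "y m"] by simp
    then have "dist (x k) (x 0) \<le> 2 * dist (y m) (x 0)"
      using dist_triangle[of "x k" "x 0" "y m"] by (simp add: dist_commute)
    moreover have "dist (y m) (x 0) \<le> dist (y m) (y 0) + d00" unfolding d00_def by (rule dist_triangle)
    moreover have "dist (y m) (y 0) \<le> K * \<bar>real_of_int (m - 0)\<bar> + K" by (rule Y.qi_up)
    moreover have "K * \<bar>real_of_int (m - 0)\<bar> \<le> K * real_of_int m0" using m X.Kpos by simp
    ultimately have "dist (x k) (x 0) \<le> 2*(K * real_of_int m0 + K + d00)" by argo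
    then have "\<bar>real_of_int (k - 0)\<bar> \<le> K * (2*(K * real_of_int m0 + K + d00) + K)" by (rule X.idx_bound)
    then show ?thesis by simp
  qed
  define N where "N = max (\<bar>real_of_int k0\<bar> + K * (8*K + K)) (K * (2*(K * real_of_int m0 + K + d00) + K))"
  show ?thesis
  proof (intro exI[of _ N] allI impI)
    fix m k assume m: "0 \<le> m" and k: "x k \<in> proj (range x) (y m)"
    show "\<bar>real_of_int k\<bar> \<le> N"
    proof (cases "m \<le> m0")
      case True
      then show ?thesis using near_part[OF m True k] unfolding N_def by linarith
    next
      case False
      then have "m0 \<le> m" by simp
      then have "\<bar>real_of_int (k - k0)\<bar> \<le> K * (8*K + K)" using far_part k by blast
      then show ?thesis unfolding N_def by linarith
    qed
  qed
qed


lemma rev_ax: "ax K (\<lambda>m. y (- m))"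
proof -
  have rng: "range (\<lambda>m. y (- m)) = range y"
  proof
    show "range (\<lambda>m. y (- m)) \<subseteq> range y" by auto
    show "range y \<subseteq> range (\<lambda>m. y (- m))"
    proof
      fix b assume "b \<in> range y"
      then obtain m where "b = y m" by auto
      then have "b = (\<lambda>m. y (- m)) (- m)" by simp
      then show "b \<in> range (\<lambda>m. y (- m))" by blast
    qed
  qed
  have ca: "contracting_axis K UNIV (\<lambda>m. y (- m))"
    unfolding contracting_axis_def
  proof (intro conjI ballI)
    show "consecutive UNIV" using Y.ca unfolding contracting_axis_def by simp
    show "contracting K (range (\<lambda>m. y (- m)))" using Y.ca rng unfolding contracting_axis_def by simp
    fix i j :: int
    have e: "\<bar>real_of_int (- i - - j)\<bar> = \<bar>real_of_int (i - j)\<bar>" by simp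
    show "\<bar>real_of_int (i - j)\<bar> / K - K \<le> dist (y (- i)) (y (- j))"
      using Y.qi_lo[of "-i" "-j"] e by simp
    show "dist (y (- i)) (y (- j)) \<le> K * \<bar>real_of_int (i - j)\<bar> + K"
      using Y.qi_up[of "-i" "-j"] e by simp
  qed
  show ?thesis by unfold_locales (use Y.geo Y.K1 ca in auto)
qed

lemma rev_indep: "independent x (\<lambda>m. y (- m))"
  unfolding independent_def
proof (intro allI impI)
  fix M :: real assume "M > 0"
  then obtain N where N: "\<forall>n m. dist (x n) (y m) < M \<longrightarrow> \<bar>n\<bar> \<le> N \<and> \<bar>m\<bar> \<le> N"
    using indep unfolding independent_def by blast
  show "\<exists>N. \<forall>n m. dist (x n) (y (- m)) < M \<longrightarrow> \<bar>n\<bar> \<le> N \<and> \<bar>m\<bar> \<le> N"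
    using N by (intro exI[of _ N]) force
qed

lemma BP: "\<exists>N. \<forall>m k. x k \<in> proj (range x) (y m) \<longrightarrow> \<bar>real_of_int k\<bar> \<le> N"
proof -
  interpret R: ax2 K x "\<lambda>m. y (- m)"
    using X.ax_axioms rev_ax rev_indep by (simp add: ax2_def ax2_axioms_def)
  obtain N1 where N1: "\<forall>m\<ge>0. \<forall>k. x k \<in> proj (range x) (y m) \<longrightarrow> \<bar>real_of_int k\<bar> \<le> N1"
    using BP_pos by blast
  obtain N2 where N2: "\<forall>m\<ge>0. \<forall>k. x k \<in> proj (range x) (y (- m)) \<longrightarrow> \<bar>real_of_int k\<bar> \<le> N2"
    using R.BP_pos by blast
  show ?thesis
  proof (intro exI[of _ "max N1 N2"] allI impI)
    fix m k assume k: "x k \<in> proj (range x) (y m)"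
    show "\<bar>real_of_int k\<bar> \<le> max N1 N2"
    proof (cases "m \<ge> 0")
      case True
      then show ?thesis using N1 k by force
    next
      case False
      then have "- m \<ge> 0" by simp
      then show ?thesis using N2[rule_format, of "- m" k] k by force
    qed
  qed
qed

end

lemma contracting_axis_mono:
  assumes "contracting_axis c J x" "c \<le> c'" "c > 0"
  shows "contracting_axis c' J x"
  unfolding contracting_axis_def
proof (intro conjI ballI)
  show "consecutive J" using assms(1) unfolding contracting_axis_def by simp
  fix i j assume ij: "i \<in> J" "j \<in> J"
  have "\<bar>real_of_int (i - j)\<bar> / c' \<le> \<bar>real_of_int (i - j)\<bar> / c"
    using assms(2,3) by (intro divide_left_mono) auto
  then show "\<bar>real_of_int (i - j)\<bar> / c' - c' \<le> dist (x i) (x j)"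
    using assms ij unfolding contracting_axis_def by fastforce
  have "c * \<bar>real_of_int (i - j)\<bar> \<le> c' * \<bar>real_of_int (i - j)\<bar>"
    using assms(2) by (intro mult_right_mono) auto
  then show "dist (x i) (x j) \<le> c' * \<bar>real_of_int (i - j)\<bar> + c'"
    using assms ij unfolding contracting_axis_def by fastforce
next
  have c: "contracting c (x ` J)" using assms(1) unfolding contracting_axis_def by simp
  show "contracting c' (x ` J)" unfolding contracting_def
  proof (intro conjI allI impI)
    fix z show "proj (x ` J) z \<noteq> {}" using c unfolding contracting_def by simp
  next
    fix z w assume "dist z w \<le> infdist z (x ` J) - c'"
    then have "dist z w \<le> infdist z (x ` J) - c" using assms(2) by simp
    then have "diam (proj (x ` J) z \<union> proj (x ` J) w) \<le> ereal c" using c unfolding contracting_def by simp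
    then show "diam (proj (x ` J) z \<union> proj (x ` J) w) \<le> ereal c'" using assms(2) by (simp add: order_trans)
  qed
qed

lemma diam_around:
  assumes "\<And>e. e \<in> S \<Longrightarrow> dist e c \<le> B"
  shows "diam S \<le> ereal (2*B)"
proof (rule diam_le)
  fix a b assume "a \<in> S" "b \<in> S"
  then have "dist a c \<le> B" "dist b c \<le> B" using assms by auto
  moreover have "dist a b \<le> dist a c + dist b c" by (rule dist_triangle2)
  ultimately show "dist a b \<le> 2*B" by argo
qed

theorem lemma3p10:
  fixes K :: real and x y :: "int \<Rightarrow> 'a::metric_space"
  assumes "geodesic_space TYPE('a)"
    and "K > 1"
    and "contracting_axis K UNIV x" and "contracting_axis K UNIV y"
    and "independent x y"
  shows "\<exists>K' > 0.
     (\<forall>J. consecutive J \<longrightarrow> contracting_axis K' J x \<and> contracting_axis K' J y) \<and>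
     (\<forall>J. consecutive J \<and> 0 \<in> J \<longrightarrow> diam ({x 0} \<union> proj_set (x ` J) (range y)) < ereal K') \<and>
     (\<forall>M::nat. M > 0 \<longrightarrow> diam ({x 0} \<union> proj_set (x ` {0..int M}) (x ` {..0})) < ereal K')"
proof -
  interpret ax2 K x y
    using assms by (simp add: ax2_def ax2_axioms_def ax_def)
  obtain N where N: "\<And>m k. x k \<in> proj (range x) (y m) \<Longrightarrow> \<bar>real_of_int k\<bar> \<le> N" using BP by blast
  define B where "B = X.C1 + K * \<bar>N\<bar> + K"
  have C1nn: "X.C1 \<ge> 0" unfolding X.C1_def using X.C2pos X.Kpos by simp
  have Bnn: "B \<ge> 0" unfolding B_def using C1nn X.Kpos by simp
  define K' where "K' = X.Kp + Y.Kp + 2*B + 2*X.C1 + 1"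
  have XKp: "X.Kp > 0" "Y.Kp > 0" using X.Kp_ge1 Y.Kp_ge1 X.Kpos by auto
  have K'1: "K' \<ge> X.Kp" "K' \<ge> Y.Kp" "K' > 2*B" "K' > 2*X.C1" "K' > 0"
    unfolding K'_def using XKp Bnn C1nn by argo+
  show ?thesis
  proof (intro exI[of _ K'] conjI allI impI)
    show "K' > 0" by fact
  next
    fix J assume J: "consecutive J"
    show "contracting_axis K' J x"
      using contracting_axis_mono[OF X.sub_axis[OF J] K'1(1) XKp(1)] .
    show "contracting_axis K' J y"
      using contracting_axis_mono[OF Y.sub_axis[OF J] K'1(2) XKp(2)] .
  next
    fix J assume J: "consecutive J \<and> 0 \<in> J"
    have "diam ({x 0} \<union> proj_set (x ` J) (range y)) \<le> ereal (2*B)"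
    proof (rule diam_around)
      fix e assume e: "e \<in> {x 0} \<union> proj_set (x ` J) (range y)"
      show "dist e (x 0) \<le> B"
      proof (cases "e = x 0")
        case True
        then show ?thesis using Bnn by simp
      next
        case False
        then obtain m where em: "e \<in> proj (x ` J) (y m)" using e unfolding proj_set_def by auto
        define k where "k = X.idx (y m)"
        have k: "x k \<in> proj (range x) (y m)" unfolding k_def using X.idx X.P by simp
        obtain c where c: "clampP J k c" using clamp_exists J by blast
        have "\<bar>c\<bar> \<le> \<bar>k\<bar>" using clamp_zero[OF c] J by simp
        then have "\<bar>real_of_int c\<bar> \<le> \<bar>N\<bar>" using N[OF k] by linarith
        then have "K * \<bar>real_of_int (c - 0)\<bar> \<le> K * \<bar>N\<bar>" using X.Kpos by (intro mult_left_mono) auto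
        then have "dist (x c) (x 0) \<le> K * \<bar>N\<bar> + K" using X.qi_up[of c 0] by linarith
        moreover have "dist e (x c) \<le> X.C1" using X.KL[OF k c em] .
        moreover have "dist e (x 0) \<le> dist e (x c) + dist (x c) (x 0)" by (rule dist_triangle)
        ultimately show ?thesis unfolding B_def by argo
      qed
    qed
    also have "\<dots> < ereal K'" using K'1 by simp
    finally show "diam ({x 0} \<union> proj_set (x ` J) (range y)) < ereal K'" .
  next
    fix M :: nat assume M: "M > 0"
    define J where "J = {0..int M}"
    have J: "consecutive J" unfolding J_def consecutive_def by auto
    have "diam ({x 0} \<union> proj_set (x ` J) (x ` {..0})) \<le> ereal (2*X.C1)"
    proof (rule diam_around)
      fix e assume e: "e \<in> {x 0} \<union> proj_set (x ` J) (x ` {..0})"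
      show "dist e (x 0) \<le> X.C1"
      proof (cases "e = x 0")
        case True
        then show ?thesis using C1nn by simp
      next
        case False
        then obtain i where i: "i \<le> 0" and ei: "e \<in> proj (x ` J) (x i)"
          using e unfolding proj_set_def by auto
        have k: "x i \<in> proj (range x) (x i)" using X.proj_self[of "x i"] by simp
        obtain c where c: "clampP J i c" using clamp_exists J by blast
        have "c = 0" using c i unfolding clampP_def J_def by force
        then show ?thesis using X.KL[OF k c ei] by simp
      qed
    qed
    also have "\<dots> < ereal K'" using K'1 by simp
    finally show "diam ({x 0} \<union> proj_set (x ` {0..int M}) (x ` {..0})) < ereal K'" unfolding J_def .
  qed
qed

end
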